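(* Let $(S,\mathcal{T})$ be a configuration with $|S|=k$ and $\mathcal{T}=(T_1,T_2)$, and let $V_1$ be a fixed total order on $C=\{c_1,\ldots,c_m\}$. Then the number of total orders $V_2$ on $C$ such that the election $(C,(V_1,V_2))$ avoids $(S,\mathcal{T})$ equals $S_m(\pi,\pi^{-1})$, where $\pi=p(T_1,T_2)$.
   Context: An election $(C,\mathcal{P})$ is a set $C$ of candidates with a tuple $\mathcal{P}=(V_1,\ldots,V_n)$ of total orders on $C$. A configuration $(S,\mathcal{T})$ is a finite set $S$ with a tuple $\mathcal{T}=(T_1,\ldots,T_l)$ of total orders on $S$. The election contains the configuration if there are injective maps $f:\{1,\ldots,l\}\to\{1,\ldots,n\}$ and $g:S\to C$ such that for all distinct $x,y\in S$ and all $i$, $T_i$ ranking $x$ above $y$ implies $V_{f(i)}$ ranks $g(x)$ above $g(y)$; otherwise it avoids it. For two total orders $T_1,T_2$ on the same $k$-element set, $p(T_1,T_2)$ is the $k$-permutation mapping $i$ to $j$ whenever the $i$-th highest ranked element of $T_1$ is the $j$-th highest ranked element of $T_2$. A $k$-permutation $\pi$ is contained as a pattern in an $m$-permutation $\tau$ if there is a strictly increasing $\mu:\{1,\ldots,k\}\to\{1,\ldots,m\}$ with $(\mu(\pi(1)),\ldots,\mu(\pi(k)))$ a subsequence of $(\tau(1),\ldots,\tau(m))$. $S_m(\pi_1,\ldots,\pi_l)$ denotes the number of $m$-permutations avoiding (not containing) each of the patterns $\pi_1,\ldots,\pi_l$. *)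

theory Defs
  imports Main "HOL-Combinatorics.Permutations"
begin

text \<open>The pair (x,y) in R means that
x is ranked at least as high as y; for distinct x, y it means "x is ranked above y".\<close>

text \<open>Elections and configurations: the tuple of orders is a list (0-indexed).
The election (C, Ps) contains the configuration (S, Ts).\<close>
definition election_contains ::
  "'b set \<Rightarrow> ('b \<times> 'b) set list \<Rightarrow> 'a set \<Rightarrow> ('a \<times> 'a) set list \<Rightarrow> bool" where
  "election_contains C Ps S Ts \<longleftrightarrow>
     (\<exists>f g. inj_on f {..<length Ts} \<and> f ` {..<length Ts} \<subseteq> {..<length Ps} \<and>
            inj_on g S \<and> g ` S \<subseteq> C \<and>
            (\<forall>i<length Ts. \<forall>x\<in>S. \<forall>y\<in>S. x \<noteq> y \<longrightarrow> (x, y) \<in> Ts ! i \<longrightarrow>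
                 (g x, g y) \<in> Ps ! (f i)))"

definition election_avoids ::
  "'b set \<Rightarrow> ('b \<times> 'b) set list \<Rightarrow> 'a set \<Rightarrow> ('a \<times> 'a) set list \<Rightarrow> bool" where
  "election_avoids C Ps S Ts \<longleftrightarrow> \<not> election_contains C Ps S Ts"

text \<open>Position (1 = highest) of x in the total order T on S.\<close>
definition rank_in :: "'a set \<Rightarrow> ('a \<times> 'a) set \<Rightarrow> 'a \<Rightarrow> nat" where
  "rank_in S T x = card {y \<in> S. (y, x) \<in> T}"

definition ith_highest :: "'a set \<Rightarrow> ('a \<times> 'a) set \<Rightarrow> nat \<Rightarrow> 'a" where
  "ith_highest S T i = (THE x. x \<in> S \<and> rank_in S T x = i)"

text \<open>p(T1,T2) as a permutation of {1..k}, k = card S (identity outside {1..k}).\<close>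
definition perm_of_orders :: "'a set \<Rightarrow> ('a \<times> 'a) set \<Rightarrow> ('a \<times> 'a) set \<Rightarrow> nat \<Rightarrow> nat" where
  "perm_of_orders S T1 T2 i =
     (if i \<in> {1..card S} then rank_in S T2 (ith_highest S T1 i) else i)"

text \<open>The k-permutation pi is contained as a pattern in the m-permutation tau:
there are strictly increasing mu : {1..k} -> {1..m} and an index selection nu
(strictly increasing, witnessing the subsequence) with tau(nu j) = mu(pi j).\<close>
definition pattern_contains :: "nat \<Rightarrow> (nat \<Rightarrow> nat) \<Rightarrow> nat \<Rightarrow> (nat \<Rightarrow> nat) \<Rightarrow> bool" where
  "pattern_contains k \<pi> m \<tau> \<longleftrightarrow>
     (\<exists>\<mu> \<nu>. strict_mono_on {1..k} \<mu> \<and> \<mu> ` {1..k} \<subseteq> {1..m} \<and>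
            strict_mono_on {1..k} \<nu> \<and> \<nu> ` {1..k} \<subseteq> {1..m} \<and>
            (\<forall>j\<in>{1..k}. \<tau> (\<nu> j) = \<mu> (\<pi> j)))"

definition num_avoiding :: "nat \<Rightarrow> nat \<Rightarrow> (nat \<Rightarrow> nat) list \<Rightarrow> nat" where
  "num_avoiding m k ps =
     card {\<tau>. \<tau> permutes {1..m} \<and> (\<forall>\<pi>\<in>set ps. \<not> pattern_contains k \<pi> m \<tau>)}"

end

theory Submission
  imports Defs
begin

lemma lin_facts:
  assumes "linear_order_on S T"
  shows "T \<subseteq> S \<times> S" "\<And>x. x \<in> S \<Longrightarrow> (x,x) \<in> T" "trans T" "antisym T"
    "\<And>x y. x \<in> S \<Longrightarrow> y \<in> S \<Longrightarrow> x \<noteq> y \<Longrightarrow> (x,y) \<in> T \<or> (y,x) \<in> T"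
  using assms unfolding linear_order_on_def partial_order_on_def preorder_on_def refl_on_def total_on_def
  by auto

lemma rank_range:
  assumes "finite S" "linear_order_on S T" "x \<in> S"
  shows "rank_in S T x \<in> {1..card S}"
proof -
  have "x \<in> {y \<in> S. (y, x) \<in> T}" using lin_facts(2)[OF assms(2) assms(3)] assms(3) by auto
  hence "card {y \<in> S. (y, x) \<in> T} \<ge> 1" using assms(1)
    by (metis (no_types, lifting) One_nat_def Suc_leI card_gt_0_iff empty_iff finite_subset mem_Collect_eq subsetI)
  moreover have "card {y \<in> S. (y, x) \<in> T} \<le> card S" using assms(1) by (intro card_mono) auto
  ultimately show ?thesis unfolding rank_in_def by auto
qed

lemma rank_le_iff:
  assumes "finite S" "linear_order_on S T" "x \<in> S" "y \<in> S"
  shows "(x,y) \<in> T \<longleftrightarrow> rank_in S T x \<le> rank_in S T y"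
proof
  assume xy: "(x,y) \<in> T"
  have "{z \<in> S. (z, x) \<in> T} \<subseteq> {z \<in> S. (z, y) \<in> T}"
    using xy lin_facts(3)[OF assms(2)] by (auto dest: transD)
  thus "rank_in S T x \<le> rank_in S T y" unfolding rank_in_def using assms(1)
    by (intro card_mono) auto
next
  assume le: "rank_in S T x \<le> rank_in S T y"
  show "(x,y) \<in> T"
  proof (rule ccontr)
    assume n: "(x,y) \<notin> T"
    hence ne: "x \<noteq> y" using lin_facts(2)[OF assms(2) assms(3)] by auto
    hence yx: "(y,x) \<in> T" using n lin_facts(5)[OF assms(2) assms(3,4)] by auto
    have "{z \<in> S. (z, y) \<in> T} \<subset> {z \<in> S. (z, x) \<in> T}"
    proof
      show "{z \<in> S. (z, y) \<in> T} \<subseteq> {z \<in> S. (z, x) \<in> T}"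
        using yx lin_facts(3)[OF assms(2)] by (auto dest: transD)
      have "x \<in> {z \<in> S. (z, x) \<in> T}" using lin_facts(2)[OF assms(2) assms(3)] assms(3) by auto
      moreover have "x \<notin> {z \<in> S. (z, y) \<in> T}" using n by auto
      ultimately show "{z \<in> S. (z, y) \<in> T} \<noteq> {z \<in> S. (z, x) \<in> T}" by blast
    qed
    hence "rank_in S T y < rank_in S T x" unfolding rank_in_def using assms(1)
      by (intro psubset_card_mono) auto
    thus False using le by simp
  qed
qed

lemma rank_inj:
  assumes "finite S" "linear_order_on S T"
  shows "inj_on (rank_in S T) S"
proof (rule inj_onI)
  fix x y assume "x \<in> S" "y \<in> S" "rank_in S T x = rank_in S T y"
  hence "(x,y) \<in> T" "(y,x) \<in> T" using rank_le_iff[OF assms] by auto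
  thus "x = y" using lin_facts(4)[OF assms(2)] by (auto dest: antisymD)
qed

lemma rank_less_iff:
  assumes "finite S" "linear_order_on S T" "x \<in> S" "y \<in> S"
  shows "rank_in S T x < rank_in S T y \<longleftrightarrow> (x,y) \<in> T \<and> x \<noteq> y"
  using rank_le_iff[OF assms] rank_inj[OF assms(1,2)] assms(3,4)
  by (metis inj_on_eq_iff order_less_le)

lemma rank_bij:
  assumes "finite S" "linear_order_on S T"
  shows "bij_betw (rank_in S T) S {1..card S}"
proof -
  have sub: "rank_in S T ` S \<subseteq> {1..card S}" using rank_range[OF assms] by auto
  have "card (rank_in S T ` S) = card {1..card S}"
    using card_image[OF rank_inj[OF assms]] by simp
  hence "rank_in S T ` S = {1..card S}" using sub by (intro card_subset_eq) auto
  thus ?thesis using rank_inj[OF assms] unfolding bij_betw_def by simp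
qed

lemma ith_props:
  assumes "finite S" "linear_order_on S T" "i \<in> {1..card S}"
  shows "ith_highest S T i \<in> S \<and> rank_in S T (ith_highest S T i) = i"
proof -
  obtain x where x: "x \<in> S" "rank_in S T x = i"
    using rank_bij[OF assms(1,2)] assms(3) unfolding bij_betw_def by (metis imageE)
  have "ith_highest S T i = x" unfolding ith_highest_def
    using x rank_inj[OF assms(1,2)] by (intro the_equality) (auto dest: inj_onD)
  thus ?thesis using x by simp
qed

lemma ith_rank:
  assumes "finite S" "linear_order_on S T" "x \<in> S"
  shows "ith_highest S T (rank_in S T x) = x"
  unfolding ith_highest_def
  using assms rank_inj[OF assms(1,2)] by (intro the_equality) (auto dest: inj_onD)


lemma perm_val:
  assumes "finite S" "linear_order_on S A1" "linear_order_on S A2" "x \<in> S"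
  shows "perm_of_orders S A1 A2 (rank_in S A1 x) = rank_in S A2 x"
  using rank_range[OF assms(1,2,4)] ith_rank[OF assms(1,2,4)]
  unfolding perm_of_orders_def by simp

lemma embed_iff_pattern:
  assumes fS: "finite S" and fC: "finite C"
    and A1: "linear_order_on S A1" and A2: "linear_order_on S A2"
    and B1: "linear_order_on C B1" and B2: "linear_order_on C B2"
  shows "(\<exists>g. inj_on g S \<and> g ` S \<subseteq> C \<and>
            (\<forall>x\<in>S. \<forall>y\<in>S. x \<noteq> y \<longrightarrow> (x,y) \<in> A1 \<longrightarrow> (g x, g y) \<in> B1) \<and>
            (\<forall>x\<in>S. \<forall>y\<in>S. x \<noteq> y \<longrightarrow> (x,y) \<in> A2 \<longrightarrow> (g x, g y) \<in> B2))
     \<longleftrightarrow> pattern_contains (card S) (perm_of_orders S A1 A2) (card C) (perm_of_orders C B1 B2)"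
    (is "?L \<longleftrightarrow> ?R")
proof
  assume ?L
  then obtain g where inj: "inj_on g S" and gS: "g ` S \<subseteq> C"
    and c1: "\<forall>x\<in>S. \<forall>y\<in>S. x \<noteq> y \<longrightarrow> (x,y) \<in> A1 \<longrightarrow> (g x, g y) \<in> B1"
    and c2: "\<forall>x\<in>S. \<forall>y\<in>S. x \<noteq> y \<longrightarrow> (x,y) \<in> A2 \<longrightarrow> (g x, g y) \<in> B2" by blast
  define \<nu> where "\<nu> j = rank_in C B1 (g (ith_highest S A1 j))" for j
  define \<mu> where "\<mu> r = rank_in C B2 (g (ith_highest S A2 r))" for r
  have mono: "strict_mono_on {1..card S} (\<lambda>j. rank_in C B (g (ith_highest S A j)))"
    if A: "linear_order_on S A" and B: "linear_order_on C B"
     and c: "\<forall>x\<in>S. \<forall>y\<in>S. x \<noteq> y \<longrightarrow> (x,y) \<in> A \<longrightarrow> (g x, g y) \<in> B" for A B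
  proof (rule strict_mono_onI)
    fix i j assume i: "i \<in> {1..card S}" and j: "j \<in> {1..card S}" and ij: "i < j"
    let ?x = "ith_highest S A i" and ?y = "ith_highest S A j"
    have x: "?x \<in> S" "rank_in S A ?x = i" using ith_props[OF fS A i] by auto
    have y: "?y \<in> S" "rank_in S A ?y = j" using ith_props[OF fS A j] by auto
    have "(?x, ?y) \<in> A \<and> ?x \<noteq> ?y" using rank_less_iff[OF fS A x(1) y(1)] x y ij by simp
    hence "(g ?x, g ?y) \<in> B \<and> g ?x \<noteq> g ?y" using c x y inj by (auto dest: inj_onD)
    thus "rank_in C B (g ?x) < rank_in C B (g ?y)"
      using rank_less_iff[OF fC B] gS x(1) y(1) by auto
  qed
  have rng: "(\<lambda>j. rank_in C B (g (ith_highest S A j))) ` {1..card S} \<subseteq> {1..card C}"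
    if A: "linear_order_on S A" and B: "linear_order_on C B" for A B
  proof
    fix r assume "r \<in> (\<lambda>j. rank_in C B (g (ith_highest S A j))) ` {1..card S}"
    then obtain j where j: "j \<in> {1..card S}" and r: "r = rank_in C B (g (ith_highest S A j))" by auto
    have "g (ith_highest S A j) \<in> C" using ith_props[OF fS A j] gS by auto
    thus "r \<in> {1..card C}" using rank_range[OF fC B] r by blast
  qed
  show ?R unfolding pattern_contains_def
  proof (intro exI conjI)
    show "strict_mono_on {1..card S} \<mu>" unfolding \<mu>_def using mono[OF A2 B2 c2] .
    show "strict_mono_on {1..card S} \<nu>" unfolding \<nu>_def using mono[OF A1 B1 c1] .
    show "\<mu> ` {1..card S} \<subseteq> {1..card C}" unfolding \<mu>_def using rng[OF A2 B2] .
    show "\<nu> ` {1..card S} \<subseteq> {1..card C}" unfolding \<nu>_def using rng[OF A1 B1] .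
    show "\<forall>j\<in>{1..card S}. perm_of_orders C B1 B2 (\<nu> j) = \<mu> (perm_of_orders S A1 A2 j)"
    proof
      fix j assume j: "j \<in> {1..card S}"
      let ?x = "ith_highest S A1 j"
      have x: "?x \<in> S" "rank_in S A1 ?x = j" using ith_props[OF fS A1 j] by auto
      have gx: "g ?x \<in> C" using x gS by auto
      have "perm_of_orders C B1 B2 (\<nu> j) = rank_in C B2 (g ?x)"
        unfolding \<nu>_def using perm_val[OF fC B1 B2 gx] .
      moreover have "perm_of_orders S A1 A2 j = rank_in S A2 ?x"
        using perm_val[OF fS A1 A2 x(1)] x(2) by simp
      ultimately show "perm_of_orders C B1 B2 (\<nu> j) = \<mu> (perm_of_orders S A1 A2 j)"
        unfolding \<mu>_def using ith_rank[OF fS A2 x(1)] by simp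
    qed
  qed
next
  assume ?R
  then obtain \<mu> \<nu> where smu: "strict_mono_on {1..card S} \<mu>" and mur: "\<mu> ` {1..card S} \<subseteq> {1..card C}"
    and snu: "strict_mono_on {1..card S} \<nu>" and nur: "\<nu> ` {1..card S} \<subseteq> {1..card C}"
    and eq: "\<forall>j\<in>{1..card S}. perm_of_orders C B1 B2 (\<nu> j) = \<mu> (perm_of_orders S A1 A2 j)"
    unfolding pattern_contains_def by blast
  define g where "g x = ith_highest C B1 (\<nu> (rank_in S A1 x))" for x
  have r1: "rank_in S A1 x \<in> {1..card S}" if "x \<in> S" for x using rank_range[OF fS A1 that] .
  have r2: "rank_in S A2 x \<in> {1..card S}" if "x \<in> S" for x using rank_range[OF fS A2 that] .
  have gC: "g x \<in> C" and rg1: "rank_in C B1 (g x) = \<nu> (rank_in S A1 x)" if "x \<in> S" for x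
  proof -
    have "\<nu> (rank_in S A1 x) \<in> {1..card C}" using nur r1[OF that] by blast
    from ith_props[OF fC B1 this] show "g x \<in> C" "rank_in C B1 (g x) = \<nu> (rank_in S A1 x)"
      unfolding g_def by auto
  qed
  have rg2: "rank_in C B2 (g x) = \<mu> (rank_in S A2 x)" if x: "x \<in> S" for x
  proof -
    have "rank_in C B2 (g x) = perm_of_orders C B1 B2 (rank_in C B1 (g x))"
      using perm_val[OF fC B1 B2 gC[OF x]] by simp
    also have "\<dots> = \<mu> (perm_of_orders S A1 A2 (rank_in S A1 x))"
      using rg1[OF x] eq r1[OF x] by simp
    also have "\<dots> = \<mu> (rank_in S A2 x)" using perm_val[OF fS A1 A2 x] by simp
    finally show ?thesis .
  qed
  have less: "\<And>a b. a \<in> {1..card S} \<Longrightarrow> b \<in> {1..card S} \<Longrightarrow> a < b \<Longrightarrow> \<nu> a < \<nu> b"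
    using snu unfolding strict_mono_on_def by blast
  have lessm: "\<And>a b. a \<in> {1..card S} \<Longrightarrow> b \<in> {1..card S} \<Longrightarrow> a < b \<Longrightarrow> \<mu> a < \<mu> b"
    using smu unfolding strict_mono_on_def by blast
  show ?L
  proof (intro exI conjI)
    show "inj_on g S"
    proof (rule inj_onI)
      fix x y assume x: "x \<in> S" and y: "y \<in> S" and gxy: "g x = g y"
      hence "\<nu> (rank_in S A1 x) = \<nu> (rank_in S A1 y)" using rg1 by metis
      hence "rank_in S A1 x = rank_in S A1 y" using less r1 x y
        by (metis linorder_neqE_nat less_irrefl)
      thus "x = y" using rank_inj[OF fS A1] x y by (auto dest: inj_onD)
    qed
    show "g ` S \<subseteq> C" using gC by auto
    show "\<forall>x\<in>S. \<forall>y\<in>S. x \<noteq> y \<longrightarrow> (x,y) \<in> A1 \<longrightarrow> (g x, g y) \<in> B1"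
    proof (intro ballI impI)
      fix x y assume x: "x \<in> S" and y: "y \<in> S" and "x \<noteq> y" "(x,y) \<in> A1"
      hence "rank_in S A1 x < rank_in S A1 y" using rank_less_iff[OF fS A1 x y] by simp
      hence "rank_in C B1 (g x) < rank_in C B1 (g y)" using rg1 x y less r1 by simp
      thus "(g x, g y) \<in> B1" using rank_less_iff[OF fC B1 gC[OF x] gC[OF y]] by simp
    qed
    show "\<forall>x\<in>S. \<forall>y\<in>S. x \<noteq> y \<longrightarrow> (x,y) \<in> A2 \<longrightarrow> (g x, g y) \<in> B2"
    proof (intro ballI impI)
      fix x y assume x: "x \<in> S" and y: "y \<in> S" and "x \<noteq> y" "(x,y) \<in> A2"
      hence "rank_in S A2 x < rank_in S A2 y" using rank_less_iff[OF fS A2 x y] by simp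
      hence "rank_in C B2 (g x) < rank_in C B2 (g y)" using rg2 x y lessm r2 by simp
      thus "(g x, g y) \<in> B2" using rank_less_iff[OF fC B2 gC[OF x] gC[OF y]] by simp
    qed
  qed
qed


lemma perm_permutes:
  assumes fS: "finite S" and A1: "linear_order_on S A1" and A2: "linear_order_on S A2"
  shows "perm_of_orders S A1 A2 permutes {1..card S}"
proof (rule bij_imp_permutes)
  let ?P = "perm_of_orders S A1 A2"
  have inj: "inj_on ?P {1..card S}"
  proof (rule inj_onI)
    fix i j assume i: "i \<in> {1..card S}" and j: "j \<in> {1..card S}" and e: "?P i = ?P j"
    note pi = ith_props[OF fS A1 i] and pj = ith_props[OF fS A1 j]
    have "rank_in S A2 (ith_highest S A1 i) = rank_in S A2 (ith_highest S A1 j)"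
      using e i j unfolding perm_of_orders_def by simp
    hence "ith_highest S A1 i = ith_highest S A1 j"
      using rank_inj[OF fS A2] pi pj by (auto dest: inj_onD)
    thus "i = j" using pi pj by metis
  qed
  have sub: "?P ` {1..card S} \<subseteq> {1..card S}"
  proof
    fix r assume "r \<in> ?P ` {1..card S}"
    then obtain i where i: "i \<in> {1..card S}" and r: "r = ?P i" by auto
    have "r = rank_in S A2 (ith_highest S A1 i)" using i r unfolding perm_of_orders_def by simp
    thus "r \<in> {1..card S}" using rank_range[OF fS A2] ith_props[OF fS A1 i] by blast
  qed
  have "card (?P ` {1..card S}) = card {1..card S}" using card_image[OF inj] .
  hence "?P ` {1..card S} = {1..card S}" using sub by (intro card_subset_eq) auto
  thus "bij_betw ?P {1..card S} {1..card S}" using inj unfolding bij_betw_def by simp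
  show "\<And>x. x \<notin> {1..card S} \<Longrightarrow> ?P x = x" unfolding perm_of_orders_def by auto
qed

lemma perm_inv:
  assumes fS: "finite S" and A1: "linear_order_on S A1" and A2: "linear_order_on S A2"
  shows "inv (perm_of_orders S A1 A2) = perm_of_orders S A2 A1"
proof (rule permutes_invI[OF perm_permutes[OF assms]])
  fix i assume i: "i \<in> {1..card S}"
  note p = ith_props[OF fS A1 i]
  have "perm_of_orders S A1 A2 i = rank_in S A2 (ith_highest S A1 i)"
    using i unfolding perm_of_orders_def by simp
  thus "perm_of_orders S A2 A1 (perm_of_orders S A1 A2 i) = i"
    using perm_val[OF fS A2 A1, of "ith_highest S A1 i"] p by simp
next
  fix i assume "i \<notin> {1..card S}"
  thus "perm_of_orders S A2 A1 i = i" unfolding perm_of_orders_def by auto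
qed

lemma order_from_bij:
  assumes fC: "finite C" and h: "bij_betw h C {1..card C}"
  defines "V \<equiv> {(x,y). x \<in> C \<and> y \<in> C \<and> h x \<le> h y}"
  shows "linear_order_on C V" and "\<And>x. x \<in> C \<Longrightarrow> rank_in C V x = h x"
proof -
  have inj: "inj_on h C" using h bij_betw_def by blast
  show "linear_order_on C V"
    unfolding V_def linear_order_on_def partial_order_on_def preorder_on_def refl_on_def
      total_on_def trans_def antisym_def
    using inj by (auto dest: inj_onD)
  fix x assume x: "x \<in> C"
  have hx: "h x \<in> {1..card C}" using h x bij_betwE by blast
  have "{y \<in> C. (y, x) \<in> V} = {y \<in> C. h y \<le> h x}" unfolding V_def using x by auto
  moreover have "h ` {y \<in> C. h y \<le> h x} = {1..h x}"
  proof
    show "h ` {y \<in> C. h y \<le> h x} \<subseteq> {1..h x}" using h bij_betwE by fastforce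
    show "{1..h x} \<subseteq> h ` {y \<in> C. h y \<le> h x}"
    proof
      fix r assume r: "r \<in> {1..h x}"
      hence "r \<in> {1..card C}" using hx by auto
      then obtain y where "y \<in> C" "h y = r" using h unfolding bij_betw_def by (metis imageE)
      thus "r \<in> h ` {y \<in> C. h y \<le> h x}" using r by auto
    qed
  qed
  moreover have "inj_on h {y \<in> C. h y \<le> h x}" using inj by (rule inj_on_subset) auto
  ultimately show "rank_in C V x = h x" unfolding rank_in_def
    by (metis card_image card_atLeastAtMost diff_Suc_1)
qed


lemma phi_bij:
  assumes fC: "finite C" and V1: "linear_order_on C V1"
  shows "bij_betw (perm_of_orders C V1) {V. linear_order_on C V} {\<tau>. \<tau> permutes {1..card C}}"
proof -
  let ?\<Phi> = "perm_of_orders C V1"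
  have inj: "inj_on ?\<Phi> {V. linear_order_on C V}"
  proof (rule inj_onI)
    fix V V' assume V: "V \<in> {V. linear_order_on C V}" and V': "V' \<in> {V. linear_order_on C V}"
      and e: "?\<Phi> V = ?\<Phi> V'"
    have lV: "linear_order_on C V" and lV': "linear_order_on C V'" using V V' by auto
    have r: "rank_in C V x = rank_in C V' x" if x: "x \<in> C" for x
      using perm_val[OF fC V1 lV x] perm_val[OF fC V1 lV' x] e by simp
    show "V = V'"
    proof (intro set_eqI iffI)
      fix p assume "p \<in> V"
      then obtain x y where p: "p = (x,y)" "x \<in> C" "y \<in> C" "(x,y) \<in> V"
        using lin_facts(1)[OF lV] by (cases p) auto
      thus "p \<in> V'" using rank_le_iff[OF fC lV p(2,3)] rank_le_iff[OF fC lV' p(2,3)] r by simp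
    next
      fix p assume "p \<in> V'"
      then obtain x y where p: "p = (x,y)" "x \<in> C" "y \<in> C" "(x,y) \<in> V'"
        using lin_facts(1)[OF lV'] by (cases p) auto
      thus "p \<in> V" using rank_le_iff[OF fC lV p(2,3)] rank_le_iff[OF fC lV' p(2,3)] r by simp
    qed
  qed
  have img: "?\<Phi> ` {V. linear_order_on C V} = {\<tau>. \<tau> permutes {1..card C}}"
  proof
    show "?\<Phi> ` {V. linear_order_on C V} \<subseteq> {\<tau>. \<tau> permutes {1..card C}}"
      using perm_permutes[OF fC V1] by auto
    show "{\<tau>. \<tau> permutes {1..card C}} \<subseteq> ?\<Phi> ` {V. linear_order_on C V}"
    proof
      fix \<tau> assume "\<tau> \<in> {\<tau>. \<tau> permutes {1..card C}}"
      hence tp: "\<tau> permutes {1..card C}" by simp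
      have hb: "bij_betw (\<tau> \<circ> rank_in C V1) C {1..card C}"
        using bij_betw_trans[OF rank_bij[OF fC V1] permutes_imp_bij[OF tp]] .
      define V where "V = {(x,y). x \<in> C \<and> y \<in> C \<and> (\<tau> \<circ> rank_in C V1) x \<le> (\<tau> \<circ> rank_in C V1) y}"
      have lV: "linear_order_on C V" and rV: "\<And>x. x \<in> C \<Longrightarrow> rank_in C V x = \<tau> (rank_in C V1 x)"
        using order_from_bij[OF fC hb] unfolding V_def by auto
      have "?\<Phi> V = \<tau>"
      proof
        fix i show "?\<Phi> V i = \<tau> i"
        proof (cases "i \<in> {1..card C}")
          case True
          note p = ith_props[OF fC V1 True]
          show ?thesis using True p rV[of "ith_highest C V1 i"] unfolding perm_of_orders_def by simp
        next
          case False
          thus ?thesis using permutes_not_in[OF tp False] unfolding perm_of_orders_def by auto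
        qed
      qed
      thus "\<tau> \<in> ?\<Phi> ` {V. linear_order_on C V}" using lV by blast
    qed
  qed
  show ?thesis using inj img unfolding bij_betw_def by simp
qed

definition embeds where
  "embeds S C A1 A2 B1 B2 \<longleftrightarrow> (\<exists>g. inj_on g S \<and> g ` S \<subseteq> C \<and>
            (\<forall>x\<in>S. \<forall>y\<in>S. x \<noteq> y \<longrightarrow> (x,y) \<in> A1 \<longrightarrow> (g x, g y) \<in> B1) \<and>
            (\<forall>x\<in>S. \<forall>y\<in>S. x \<noteq> y \<longrightarrow> (x,y) \<in> A2 \<longrightarrow> (g x, g y) \<in> B2))"

lemma contains_iff:
  "election_contains C [V1, V2] S [T1, T2] \<longleftrightarrow>
     embeds S C T1 T2 V1 V2 \<or> embeds S C T2 T1 V1 V2"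
proof
  assume "election_contains C [V1, V2] S [T1, T2]"
  then obtain f g where f: "inj_on f {..<2}" "f ` {..<2} \<subseteq> {..<2}" and g: "inj_on g S" "g ` S \<subseteq> C"
    and c: "\<forall>i<2. \<forall>x\<in>S. \<forall>y\<in>S. x \<noteq> y \<longrightarrow> (x, y) \<in> [T1, T2] ! i \<longrightarrow> (g x, g y) \<in> [V1, V2] ! (f i)"
    unfolding election_contains_def by (simp only: list.size numeral_2_eq_2 One_nat_def) auto
  have c0: "\<forall>x\<in>S. \<forall>y\<in>S. x \<noteq> y \<longrightarrow> (x, y) \<in> T1 \<longrightarrow> (g x, g y) \<in> [V1, V2] ! (f 0)"
    using c by (metis nth_Cons_0 zero_less_numeral)
  have c1: "\<forall>x\<in>S. \<forall>y\<in>S. x \<noteq> y \<longrightarrow> (x, y) \<in> T2 \<longrightarrow> (g x, g y) \<in> [V1, V2] ! (f 1)"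
    using c by (metis One_nat_def nth_Cons_Suc nth_Cons_0 one_less_numeral_iff semiring_norm(76))
  have f01: "f 0 < 2" "f 1 < 2" "f 0 \<noteq> f 1"
    using f(2) apply (force, force) using f(1) by (auto dest: inj_onD)
  show "embeds S C T1 T2 V1 V2 \<or> embeds S C T2 T1 V1 V2"
  proof (cases "f 0 = 0")
    case True
    hence "f 1 = 1" using f01 by linarith
    thus ?thesis using True c0 c1 g unfolding embeds_def by auto
  next
    case False
    hence "f 0 = 1" "f 1 = 0" using f01 by linarith+
    thus ?thesis using c0 c1 g unfolding embeds_def by auto
  qed
next
  assume "embeds S C T1 T2 V1 V2 \<or> embeds S C T2 T1 V1 V2"
  thus "election_contains C [V1, V2] S [T1, T2]"
  proof
    assume "embeds S C T1 T2 V1 V2"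
    then obtain g where g: "inj_on g S" "g ` S \<subseteq> C"
      "\<forall>x\<in>S. \<forall>y\<in>S. x \<noteq> y \<longrightarrow> (x,y) \<in> T1 \<longrightarrow> (g x, g y) \<in> V1"
      "\<forall>x\<in>S. \<forall>y\<in>S. x \<noteq> y \<longrightarrow> (x,y) \<in> T2 \<longrightarrow> (g x, g y) \<in> V2" unfolding embeds_def by blast
    show ?thesis unfolding election_contains_def
    proof (intro exI[of _ "\<lambda>i. i"] exI[of _ g] conjI)
      show "\<forall>i<length [T1, T2]. \<forall>x\<in>S. \<forall>y\<in>S. x \<noteq> y \<longrightarrow> (x, y) \<in> [T1, T2] ! i \<longrightarrow> (g x, g y) \<in> [V1, V2] ! i"
        using g(3,4) by (auto simp: less_Suc_eq)
    qed (use g in auto)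
  next
    assume "embeds S C T2 T1 V1 V2"
    then obtain g where g: "inj_on g S" "g ` S \<subseteq> C"
      "\<forall>x\<in>S. \<forall>y\<in>S. x \<noteq> y \<longrightarrow> (x,y) \<in> T2 \<longrightarrow> (g x, g y) \<in> V1"
      "\<forall>x\<in>S. \<forall>y\<in>S. x \<noteq> y \<longrightarrow> (x,y) \<in> T1 \<longrightarrow> (g x, g y) \<in> V2" unfolding embeds_def by blast
    show ?thesis unfolding election_contains_def
    proof (intro exI[of _ "\<lambda>i. 1 - i"] exI[of _ g] conjI)
      show "\<forall>i<length [T1, T2]. \<forall>x\<in>S. \<forall>y\<in>S. x \<noteq> y \<longrightarrow> (x, y) \<in> [T1, T2] ! i \<longrightarrow> (g x, g y) \<in> [V1, V2] ! (1 - i)"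
        using g(3,4) by (auto simp: less_Suc_eq)
      show "inj_on (\<lambda>i. 1 - i) {..<length [T1, T2]}" by (auto simp: inj_on_def)
    qed (use g in auto)
  qed
qed


theorem mainTheorem3:
  fixes S :: "'a set" and C :: "'b set"
    and T1 T2 :: "('a \<times> 'a) set" and V1 :: "('b \<times> 'b) set"
  assumes "finite S" and "finite C"
    and "linear_order_on S T1" and "linear_order_on S T2"
    and "linear_order_on C V1"
  shows "card {V2. linear_order_on C V2 \<and> election_avoids C [V1, V2] S [T1, T2]}
       = num_avoiding (card C) (card S)
           [perm_of_orders S T1 T2, inv (perm_of_orders S T1 T2)]"
proof -
  note fS = assms(1) and fC = assms(2) and T1 = assms(3) and T2 = assms(4) and V1 = assms(5)
  let ?\<Phi> = "perm_of_orders C V1"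
  let ?\<pi> = "perm_of_orders S T1 T2"
  have key: "election_avoids C [V1, V2] S [T1, T2] \<longleftrightarrow>
     (\<forall>\<pi>\<in>set [?\<pi>, inv ?\<pi>]. \<not> pattern_contains (card S) \<pi> (card C) (?\<Phi> V2))"
    if V2: "linear_order_on C V2" for V2
    unfolding election_avoids_def contains_iff embeds_def
      embed_iff_pattern[OF fS fC T1 T2 V1 V2] embed_iff_pattern[OF fS fC T2 T1 V1 V2]
      perm_inv[OF fS T1 T2] by simp
  have bij: "bij_betw ?\<Phi> {V. linear_order_on C V} {\<tau>. \<tau> permutes {1..card C}}"
    using phi_bij[OF fC V1] .
  have inj: "inj_on ?\<Phi> {V2. linear_order_on C V2 \<and> election_avoids C [V1, V2] S [T1, T2]}"
    using bij unfolding bij_betw_def by (rule conjE) (erule inj_on_subset, auto)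
  have img: "?\<Phi> ` {V2. linear_order_on C V2 \<and> election_avoids C [V1, V2] S [T1, T2]}
     = {\<tau>. \<tau> permutes {1..card C} \<and> (\<forall>\<pi>\<in>set [?\<pi>, inv ?\<pi>]. \<not> pattern_contains (card S) \<pi> (card C) \<tau>)}"
  proof
    show "?\<Phi> ` {V2. linear_order_on C V2 \<and> election_avoids C [V1, V2] S [T1, T2]}
     \<subseteq> {\<tau>. \<tau> permutes {1..card C} \<and> (\<forall>\<pi>\<in>set [?\<pi>, inv ?\<pi>]. \<not> pattern_contains (card S) \<pi> (card C) \<tau>)}"
    proof
      fix \<tau> assume "\<tau> \<in> ?\<Phi> ` {V2. linear_order_on C V2 \<and> election_avoids C [V1, V2] S [T1, T2]}"
      then obtain V where V: "linear_order_on C V" "election_avoids C [V1, V] S [T1, T2]" "\<tau> = ?\<Phi> V"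
        by blast
      have "\<tau> permutes {1..card C}" using V bij_betwE[OF bij] by blast
      thus "\<tau> \<in> {\<tau>. \<tau> permutes {1..card C} \<and> (\<forall>\<pi>\<in>set [?\<pi>, inv ?\<pi>]. \<not> pattern_contains (card S) \<pi> (card C) \<tau>)}"
        using key[OF V(1)] V by simp
    qed
    show "{\<tau>. \<tau> permutes {1..card C} \<and> (\<forall>\<pi>\<in>set [?\<pi>, inv ?\<pi>]. \<not> pattern_contains (card S) \<pi> (card C) \<tau>)}
       \<subseteq> ?\<Phi> ` {V2. linear_order_on C V2 \<and> election_avoids C [V1, V2] S [T1, T2]}"
    proof
      fix \<tau> assume t: "\<tau> \<in> {\<tau>. \<tau> permutes {1..card C} \<and> (\<forall>\<pi>\<in>set [?\<pi>, inv ?\<pi>]. \<not> pattern_contains (card S) \<pi> (card C) \<tau>)}"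
      hence "\<tau> \<in> ?\<Phi> ` {V. linear_order_on C V}" using bij unfolding bij_betw_def by simp
      then obtain V where V: "linear_order_on C V" "\<tau> = ?\<Phi> V" by blast
      thus "\<tau> \<in> ?\<Phi> ` {V2. linear_order_on C V2 \<and> election_avoids C [V1, V2] S [T1, T2]}"
        using key[OF V(1)] t by blast
    qed
  qed
  show ?thesis unfolding num_avoiding_def
    using card_image[OF inj] img by simp
qed

end
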